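(* For $\xi = (\tau_L,\delta_L,\tau_R,\delta_R) \in \mathbb{R}^4$ let $f_\xi:\mathbb{R}^2\to\mathbb{R}^2$ be $$f_\xi(x,y) = \begin{cases} (\tau_L x + y + 1,\ -\delta_L x), & x \le 0,\\ (\tau_R x + y + 1,\ -\delta_R x), & x \ge 0.\end{cases}$$ Let $\Phi = \{\xi \in \mathbb{R}^4 : \tau_L > |\delta_L + 1|,\ \tau_R < -|\delta_R+1|\}$, $\alpha(\xi) = \tau_L\tau_R + (\delta_L - 1)(\delta_R - 1)$, and $\mathcal{P}_2 = \{\xi \in \Phi : \delta_L\delta_R < 1,\ \alpha(\xi) > 0\}$. If $\xi \in \mathcal{P}_2$, then $f_\xi$ has an asymptotically stable $LR$-cycle, i.e. an asymptotically stable period-two orbit $\{P,Q\}$ with $P$ in the left half-plane $x<0$ and $Q$ in the right half-plane $x>0$. *)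

theory Defs
  imports "HOL-Analysis.Analysis"
begin

text \<open>The two-piece border-collision normal form map in R^2 (points as real \<times> real).
  The two formulas agree on x = 0.\<close>
definition bcnf :: "real \<Rightarrow> real \<Rightarrow> real \<Rightarrow> real \<Rightarrow> real \<times> real \<Rightarrow> real \<times> real" where
  "bcnf tauL deltaL tauR deltaR p =
     (let x = fst p; y = snd p in
      if x \<le> 0 then (tauL * x + y + 1, - deltaL * x)
      else (tauR * x + y + 1, - deltaR * x))"

definition Phi_region :: "real \<Rightarrow> real \<Rightarrow> real \<Rightarrow> real \<Rightarrow> bool" where
  "Phi_region tauL deltaL tauR deltaR \<longleftrightarrow>
     tauL > \<bar>deltaL + 1\<bar> \<and> tauR < - \<bar>deltaR + 1\<bar>"

definition alpha_fn :: "real \<Rightarrow> real \<Rightarrow> real \<Rightarrow> real \<Rightarrow> real" where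
  "alpha_fn tauL deltaL tauR deltaR = tauL * tauR + (deltaL - 1) * (deltaR - 1)"

definition P2_region :: "real \<Rightarrow> real \<Rightarrow> real \<Rightarrow> real \<Rightarrow> bool" where
  "P2_region tauL deltaL tauR deltaR \<longleftrightarrow>
     Phi_region tauL deltaL tauR deltaR \<and> deltaL * deltaR < 1 \<and>
     alpha_fn tauL deltaL tauR deltaR > 0"

definition lyapunov_stable_set :: "('a::metric_space \<Rightarrow> 'a) \<Rightarrow> 'a set \<Rightarrow> bool" where
  "lyapunov_stable_set f \<Gamma> \<longleftrightarrow>
     (\<forall>e>0. \<exists>d>0. \<forall>z. infdist z \<Gamma> < d \<longrightarrow> (\<forall>n. infdist ((f ^^ n) z) \<Gamma> < e))"

definition attracting_set :: "('a::metric_space \<Rightarrow> 'a) \<Rightarrow> 'a set \<Rightarrow> bool" where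
  "attracting_set f \<Gamma> \<longleftrightarrow>
     (\<exists>d>0. \<forall>z. infdist z \<Gamma> < d \<longrightarrow> ((\<lambda>n. infdist ((f ^^ n) z) \<Gamma>) \<longlonglongrightarrow> 0))"

definition asymptotically_stable_set :: "('a::metric_space \<Rightarrow> 'a) \<Rightarrow> 'a set \<Rightarrow> bool" where
  "asymptotically_stable_set f \<Gamma> \<longleftrightarrow> lyapunov_stable_set f \<Gamma> \<and> attracting_set f \<Gamma>"

definition has_stable_LR_cycle :: "(real \<times> real \<Rightarrow> real \<times> real) \<Rightarrow> bool" where
  "has_stable_LR_cycle f \<longleftrightarrow>
     (\<exists>P Q. fst P < 0 \<and> fst Q > 0 \<and> f P = Q \<and> f Q = P \<and>
            asymptotically_stable_set f {P, Q})"

end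

theory Submission
  imports Defs
begin

lemma scalar_lyap:
  fixes t e :: real
  assumes h1: "\<bar>t\<bar> < 1 + e" and h2: "e < 1"
  shows "\<exists>p q \<rho> m C. 0 < \<rho> \<and> \<rho> < 1 \<and> m > 0 \<and> C > 0 \<and>
     (\<forall>x y. (t*x - e*y)^2 + p*(t*x - e*y)*x + q*x^2 \<le> \<rho> * (x^2 + p*x*y + q*y^2)) \<and>
     (\<forall>x y. m * y^2 \<le> x^2 + p*x*y + q*y^2) \<and>
     (\<forall>x y. x^2 + p*x*y + q*y^2 \<le> C * (x^2 + y^2))"
proof -
  have e1: "1 + e > 0" using h1 by linarith
  have tt: "t^2 < (1+e)^2"
  proof -
    have "(1+e-t)*(1+e+t) > 0" using h1 by (intro mult_pos_pos) (auto simp: abs_less_iff)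
    then show ?thesis by (simp add: power2_eq_square algebra_simps)
  qed
  define p where "p = -2*t*e/(1+e)"
  define U where "U = 1 - t^2*(1-e)/(1+e)"
  have pe: "p*(1+e) = -2*t*e" using e1 unfolding p_def by (simp add: field_simps)
  have U1: "U - e^2 = (1-e)*((1+e)^2 - t^2)/(1+e)" using e1 unfolding U_def
    by (simp add: field_simps power2_eq_square)
  have p2: "p^2/4 = t^2*e^2/(1+e)^2" unfolding p_def by (simp add: power_divide power_mult_distrib)
  have U2: "(U - p^2/4)*(1+e)^2 = (1+e)^2 - t^2"
  proof -
    have a: "U*(1+e)^2 = (1+e)^2 - t^2*(1-e)*(1+e)" unfolding U_def using e1
      by (simp add: field_simps power2_eq_square)
    have b: "p^2/4*(1+e)^2 = t^2*e^2" unfolding p2 using e1 by simp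
    show ?thesis using a b by (simp add: algebra_simps power2_eq_square)
  qed
  have lo1: "e^2 < U" using U1 tt h2 e1 by (smt (verit) divide_pos_pos mult_pos_pos)
  have lo2: "p^2/4 < U"
  proof -
    have "(U - p^2/4)*(1+e)^2 > 0" using U2 tt by simp
    then show ?thesis using e1 by (smt (verit) mult_nonpos_nonneg zero_le_power2)
  qed
  define q where "q = (max (e^2) (p^2/4) + U)/2"
  have q1: "e^2 < q" "p^2/4 < q" "q < U" using lo1 lo2 unfolding q_def by auto
  define V where "V x y = x^2 + p*x*y + q*y^2" for x y :: real
  define al where "al = 1 - t^2 - p*t - q"
  define be where "be = q - e^2"
  have alU: "al = U - q"
  proof -
    have "p*t = -2*t^2*e/(1+e)" unfolding p_def by (simp add: power2_eq_square)
    then have "al = 1 - t^2 + 2*t^2*e/(1+e) - q" unfolding al_def by simp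
    also have "\<dots> = U - q" unfolding U_def using e1 by (simp add: field_simps)
    finally show ?thesis .
  qed
  have alpos: "al > 0" using alU q1 by simp
  have bepos: "be > 0" using q1 unfolding be_def by simp
  have iden: "V (t*x - e*y) x = V x y - al*x^2 - be*y^2" for x y
  proof -
    have z: "-2*t*e - p*e - p = 0" using pe by (simp add: algebra_simps)
    have "V (t*x-e*y) x - (V x y - al*x^2 - be*y^2) = (-2*t*e - p*e - p)*x*y"
      unfolding V_def al_def be_def by (simp add: power2_eq_square algebra_simps)
    then show ?thesis using z by simp
  qed
  define m where "m = q - p^2/4"
  have mpos: "m > 0" using q1 unfolding m_def by simp
  have low: "m*y^2 \<le> V x y" for x y
  proof -
    have "V x y - m*y^2 = (x + p*y/2)^2" unfolding V_def m_def by (simp add: power2_eq_square algebra_simps)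
    then show ?thesis by (smt (verit) zero_le_power2)
  qed
  have Vnn: "V x y \<ge> 0" for x y using low[of y x] mpos by (smt (verit) mult_nonneg_nonneg zero_le_power2)
  define C where "C = 1 + \<bar>p\<bar> + q"
  have Cpos: "C > 0" using q1 unfolding C_def by (smt (verit) zero_le_power2)
  have up: "V x y \<le> C*(x^2+y^2)" for x y
  proof -
    have "\<bar>p*x*y\<bar> \<le> \<bar>p\<bar>*(x^2+y^2)"
    proof -
      have "\<bar>x*y\<bar> \<le> x^2+y^2"
      proof -
        have A: "2*(\<bar>x\<bar>*\<bar>y\<bar>) \<le> x^2+y^2" using sum_squares_bound[of "\<bar>x\<bar>" "\<bar>y\<bar>"] by (simp add: mult.assoc)
        have B: "\<bar>x\<bar>*\<bar>y\<bar> \<ge> 0" by simp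
        have "\<bar>x\<bar>*\<bar>y\<bar> \<le> x^2+y^2" using A B by linarith
        then show ?thesis by (simp add: abs_mult)
      qed
      then show ?thesis by (metis abs_mult abs_ge_zero mult.assoc mult_left_mono)
    qed
    moreover have "q*y^2 \<le> q*(x^2+y^2)" using q1 by (smt (verit) mult_left_mono zero_le_power2 power2_eq_square)
    moreover have "x^2 \<le> x^2+y^2" by simp
    ultimately show ?thesis unfolding V_def C_def by (simp add: algebra_simps) (smt (verit) zero_le_power2)
  qed
  define mu where "mu = min al be"
  have mupos: "mu > 0" using alpos bepos unfolding mu_def by simp
  define r0 where "r0 = 1 - mu/C"
  define r where "r = max r0 (1/2)"
  have rr: "0 < r" "r < 1" using mupos Cpos unfolding r_def r0_def by auto
  have dec: "V (t*x - e*y) x \<le> r * V x y" for x y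
  proof -
    have "al*x^2 + be*y^2 \<ge> mu*(x^2+y^2)" unfolding mu_def
      by (smt (verit) distrib_left min.cobounded1 min.cobounded2 mult_right_mono zero_le_power2)
    moreover have "mu*(x^2+y^2) \<ge> (mu/C) * V x y"
    proof -
      have "(mu/C) * V x y \<le> (mu/C) * (C*(x^2+y^2))" using up mupos Cpos by (intro mult_left_mono) auto
      then show ?thesis using Cpos by simp
    qed
    ultimately have "V (t*x - e*y) x \<le> r0 * V x y" unfolding r0_def iden by (simp add: algebra_simps)
    moreover have "r0 * V x y \<le> r * V x y" using Vnn unfolding r_def by (intro mult_right_mono) auto
    ultimately show ?thesis by simp
  qed
  show ?thesis
    apply (rule exI[of _ p], rule exI[of _ q], rule exI[of _ r], rule exI[of _ m], rule exI[of _ C])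
    using rr mpos Cpos dec low up unfolding V_def by auto
qed


definition linA :: "real \<Rightarrow> real \<Rightarrow> real \<times> real \<Rightarrow> real \<times> real" where
  "linA a b w = (a * fst w + snd w, - b * fst w)"

lemma normsq: "(norm (w::real\<times>real))^2 = (fst w)^2 + (snd w)^2"
  by (cases w) (simp add: norm_Pair)

lemma linA_bound: "norm (linA a b w) \<le> (\<bar>a\<bar> + \<bar>b\<bar> + 1) * norm w"
proof -
  have eq: "linA a b w = fst w *\<^sub>R (a, -b) + snd w *\<^sub>R (1, 0)" unfolding linA_def by simp
  have f1: "\<bar>fst w\<bar> \<le> norm w" using dist_fst_le[of w 0] by (simp add: dist_norm)
  have f2: "\<bar>snd w\<bar> \<le> norm w" using dist_snd_le[of w 0] by (simp add: dist_norm)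
  have n1: "norm (a, -b) \<le> \<bar>a\<bar> + \<bar>b\<bar>" using norm_Pair_le[of a "-b"] by simp
  have "norm (linA a b w) \<le> norm (fst w *\<^sub>R (a, -b)) + norm (snd w *\<^sub>R (1::real, 0::real))"
    unfolding eq by (rule norm_triangle_ineq)
  also have "\<dots> = \<bar>fst w\<bar> * norm (a, -b) + \<bar>snd w\<bar>"
    unfolding norm_scaleR by simp
  also have "\<dots> \<le> norm w * (\<bar>a\<bar> + \<bar>b\<bar>) + norm w"
    using f1 f2 n1 by (intro add_mono mult_mono) auto
  finally show ?thesis by (simp add: algebra_simps)
qed

lemma quad_lyap:
  fixes Mf :: "real \<times> real \<Rightarrow> real \<times> real"
  assumes h1: "\<bar>t\<bar> < 1 + e" and h2: "e < 1"
    and CH: "\<And>w. Mf (Mf w) = t *\<^sub>R Mf w - e *\<^sub>R w"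
    and bd: "\<And>w. norm (Mf w) \<le> LM * norm w"
  shows "\<exists>W \<rho> m C. 0 < \<rho> \<and> \<rho> < 1 \<and> m > 0 \<and> C > 0 \<and> (\<forall>w. W (Mf w) \<le> \<rho> * W w) \<and>
     (\<forall>w. m * (norm w)^2 \<le> W w) \<and> (\<forall>w. W w \<le> C * (norm w)^2)"
proof -
  obtain p q \<rho> m C where r: "0 < \<rho>" "\<rho> < 1" and mC: "m > 0" "C > 0"
    and dec: "\<And>x y. (t*x - e*y)^2 + p*(t*x - e*y)*x + q*x^2 \<le> \<rho> * (x^2 + p*x*y + q*y^2)"
    and low: "\<And>x y. m * y^2 \<le> x^2 + p*x*y + q*y^2"
    and up: "\<And>x y. x^2 + p*x*y + q*y^2 \<le> C * (x^2 + y^2)"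
    using scalar_lyap[OF h1 h2] by blast
  define V where "V x y = x^2 + p*x*y + q*y^2" for x y :: real
  define W where "W w = V (fst (Mf w)) (fst w) + V (snd (Mf w)) (snd w)" for w
  have A: "W (Mf w) \<le> \<rho> * W w" for w
  proof -
    have e1: "fst (Mf (Mf w)) = t * fst (Mf w) - e * fst w" using CH[of w] by simp
    have e2: "snd (Mf (Mf w)) = t * snd (Mf w) - e * snd w" using CH[of w] by simp
    show ?thesis unfolding W_def e1 e2 using dec[of "fst (Mf w)" "fst w"] dec[of "snd (Mf w)" "snd w"]
      unfolding V_def by (simp add: algebra_simps)
  qed
  have B: "m * (norm w)^2 \<le> W w" for w
    unfolding W_def V_def normsq using low[where x="fst (Mf w)" and y="fst w"] low[where x="snd (Mf w)" and y="snd w"]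
    by (simp add: algebra_simps)
  have C: "W w \<le> (C * (LM^2 + 1)) * (norm w)^2" for w
  proof -
    have "W w \<le> C * ((norm (Mf w))^2 + (norm w)^2)"
      unfolding W_def V_def normsq using up[of "fst (Mf w)" "fst w"] up[of "snd (Mf w)" "snd w"]
      by (simp add: algebra_simps)
    also have "\<dots> \<le> C * ((LM * norm w)^2 + (norm w)^2)"
      using bd[of w] mC by (intro mult_left_mono add_mono power_mono) auto
    finally show ?thesis by (simp add: algebra_simps power_mult_distrib)
  qed
  show ?thesis
    apply (rule exI[of _ W], rule exI[of _ \<rho>], rule exI[of _ m], rule exI[of _ "C * (LM^2 + 1)"])
    using A B C r mC by (auto intro!: mult_pos_pos add_nonneg_pos)
qed


lemma sq_bound:
  fixes m C x y :: real
  assumes m: "m > 0" and C: "C > 0" and h: "m*x^2 \<le> C*y^2" and y: "0 \<le> y"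
  shows "x \<le> sqrt (C/m) * y"
proof -
  have c0: "0 \<le> C/m" using m C by simp
  have nn: "0 \<le> sqrt (C/m) * y" using c0 y by simp
  have "x^2 \<le> (C*y^2)/m" using h m by (simp add: pos_le_divide_eq mult.commute)
  also have "\<dots> = (C/m)*y^2" by simp
  also have "\<dots> = (sqrt (C/m) * y)^2" using c0 by (simp add: power_mult_distrib)
  finally have "x^2 \<le> (sqrt (C/m) * y)^2" .
  then show ?thesis using nn by (rule power2_le_imp_le)
qed

lemma half:
  fixes f :: "real \<times> real \<Rightarrow> real \<times> real"
  assumes r: "r > 0"
    and hL: "\<And>z. dist z P < r \<Longrightarrow> f z = Q + linA a b (z - P)"
    and hR: "\<And>z. dist z Q < r \<Longrightarrow> f z = P + linA c d (z - Q)"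
    and c1: "\<bar>a*c - b - d\<bar> < 1 + b*d" and c2: "b*d < 1"
  shows "\<exists>\<delta>0>0. \<exists>K \<sigma>. 0 < \<sigma> \<and> \<sigma> < 1 \<and> (\<forall>z. dist z P < \<delta>0 \<longrightarrow>
           (\<forall>n. min (dist ((f^^n) z) P) (dist ((f^^n) z) Q) \<le> K * \<sigma>^n * dist z P))"
proof -
  define L where "L = \<bar>a\<bar> + \<bar>b\<bar> + 1"
  have L1: "L \<ge> 1" unfolding L_def by simp
  define Mf where "Mf w = linA c d (linA a b w)" for w
  have CH: "Mf (Mf w) = (a*c - b - d) *\<^sub>R Mf w - (b*d) *\<^sub>R w" for w
    unfolding Mf_def linA_def by (cases w) (simp add: algebra_simps)
  have bd: "norm (Mf w) \<le> ((\<bar>c\<bar> + \<bar>d\<bar> + 1) * L) * norm w" for w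
  proof -
    have "norm (Mf w) \<le> (\<bar>c\<bar> + \<bar>d\<bar> + 1) * norm (linA a b w)" unfolding Mf_def by (rule linA_bound)
    also have "\<dots> \<le> (\<bar>c\<bar> + \<bar>d\<bar> + 1) * (L * norm w)" unfolding L_def
      by (intro mult_left_mono linA_bound) auto
    finally show ?thesis by (simp add: mult.assoc)
  qed
  obtain W \<rho> m C where rho: "0 < \<rho>" "\<rho> < 1" and mC: "m > 0" "C > 0"
    and Wdec: "\<And>w. W (Mf w) \<le> \<rho> * W w" and Wlow: "\<And>w. m * (norm w)^2 \<le> W w"
    and Wup: "\<And>w. W w \<le> C * (norm w)^2"
    using quad_lyap[OF c1 c2 CH bd] by blast
  define r1 where "r1 = r / L"
  have r1: "r1 > 0" "r1 \<le> r" using r L1 unfolding r1_def by (auto simp: field_simps)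
  have fstep: "dist (f z) Q \<le> L * dist z P" "f z = Q + linA a b (z - P)" if "dist z P < r" for z
  proof -
    show e: "f z = Q + linA a b (z - P)" using hL that by simp
    show "dist (f z) Q \<le> L * dist z P" unfolding e L_def by (simp add: dist_norm linA_bound)
  qed
  have gstep: "(f ^^ 2) z = P + Mf (z - P)" if "dist z P < r1" for z
  proof -
    have d1: "dist z P < r" using that r1 by simp
    have "dist (f z) Q \<le> L * dist z P" using fstep(1)[OF d1] .
    also have "\<dots> < L * r1" using that L1 by simp
    also have "\<dots> = r" unfolding r1_def using L1 by simp
    finally have "dist (f z) Q < r" .
    then have "f (f z) = P + linA c d (f z - Q)" using hR by simp
    also have "\<dots> = P + Mf (z - P)" unfolding Mf_def using fstep(2)[OF d1] by simp
    finally show ?thesis by (simp add: numeral_2_eq_2)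
  qed
  define \<kappa> where "\<kappa> = sqrt (C/m)"
  have kap: "\<kappa> \<ge> 0" unfolding \<kappa>_def using mC by simp
  define \<delta>0 where "\<delta>0 = r1 / (\<kappa> + 1)"
  have d0: "\<delta>0 > 0" unfolding \<delta>0_def using r1 kap by simp
  have kd: "\<kappa> * \<delta>0 < r1" unfolding \<delta>0_def using r1 kap by (simp add: field_simps)
  have d0r1: "\<delta>0 \<le> r1" unfolding \<delta>0_def using r1 kap by (simp add: field_simps)
  have main: "W ((f^^(2*n)) z - P) \<le> \<rho>^n * W (z - P) \<and> dist ((f^^(2*n)) z) P \<le> \<kappa> * (sqrt \<rho>)^n * dist z P
      \<and> dist ((f^^(2*n)) z) P < r1"
    if dz: "dist z P < \<delta>0" for z n
  proof (induction n)
    case 0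
    have "dist z P \<le> \<kappa> * dist z P"
    proof -
      have "m * (norm (z-P))^2 \<le> C * (norm (z-P))^2" using Wlow Wup order_trans by blast
      then show ?thesis using sq_bound[OF mC] unfolding \<kappa>_def by (simp add: dist_norm)
    qed
    then show ?case using dz d0r1 by simp
  next
    case (Suc n)
    define y where "y = (f^^(2*n)) z"
    have IH1: "W (y - P) \<le> \<rho>^n * W (z - P)" and IH3: "dist y P < r1" using Suc unfolding y_def by auto
    have it: "(f^^(2*Suc n)) z = P + Mf (y - P)"
    proof -
      have "(f^^(2*Suc n)) z = (f^^2) y" unfolding y_def
        by (simp add: funpow_add[symmetric, unfolded o_def] add.commute numeral_2_eq_2)
      then show ?thesis using gstep[OF IH3] by simp
    qed
    have W1: "W ((f^^(2*Suc n)) z - P) \<le> \<rho>^Suc n * W (z - P)"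
    proof -
      have "W ((f^^(2*Suc n)) z - P) = W (Mf (y - P))" unfolding it by simp
      also have "\<dots> \<le> \<rho> * W (y - P)" by (rule Wdec)
      also have "\<dots> \<le> \<rho> * (\<rho>^n * W (z - P))" using IH1 rho by (intro mult_left_mono) auto
      finally show ?thesis by simp
    qed
    have "m * (dist ((f^^(2*Suc n)) z) P)^2 \<le> C * (sqrt \<rho> ^ Suc n * dist z P)^2"
    proof -
      have "m * (dist ((f^^(2*Suc n)) z) P)^2 \<le> W ((f^^(2*Suc n)) z - P)" using Wlow by (simp add: dist_norm)
      also have "\<dots> \<le> \<rho>^Suc n * W (z - P)" by (rule W1)
      also have "\<dots> \<le> \<rho>^Suc n * (C * (dist z P)^2)" using Wup[of "z - P"] rho
        by (intro mult_left_mono) (auto simp: dist_norm)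
      also have "\<dots> = C * (sqrt \<rho> ^ Suc n * dist z P)^2" using rho
        by (simp add: power_mult_distrib real_sqrt_pow2 power_mult[symmetric] mult.commute[of _ 2] power_mult)
      finally show ?thesis .
    qed
    moreover have "0 \<le> sqrt \<rho> ^ Suc n * dist z P" using rho by simp
    ultimately have B0: "dist ((f^^(2*Suc n)) z) P \<le> \<kappa> * (sqrt \<rho> ^ Suc n * dist z P)"
      unfolding \<kappa>_def by (rule sq_bound[OF mC])
    then have B: "dist ((f^^(2*Suc n)) z) P \<le> \<kappa> * sqrt \<rho> ^ Suc n * dist z P" by (simp add: mult.assoc)
    have "\<kappa> * sqrt \<rho> ^ Suc n * dist z P \<le> \<kappa> * 1 * \<delta>0"
      using kap rho dz by (intro mult_mono power_le_one) auto
    then have "dist ((f^^(2*Suc n)) z) P < r1" using B kd by simp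
    then show ?case using W1 B by simp
  qed
  define s where "s = sqrt \<rho>"
  have s: "0 < s" "s < 1" unfolding s_def using rho by auto
  define \<sigma> where "\<sigma> = sqrt s"
  have sg: "0 < \<sigma>" "\<sigma> < 1" unfolding \<sigma>_def using s by auto
  have sg2: "\<sigma>^(2*k) = s^k" for k unfolding \<sigma>_def using s by (simp add: power_mult)
  define K where "K = \<kappa> + L * \<kappa> / \<sigma>"
  have "\<forall>z. dist z P < \<delta>0 \<longrightarrow>
           (\<forall>n. min (dist ((f^^n) z) P) (dist ((f^^n) z) Q) \<le> K * \<sigma>^n * dist z P)"
  proof (intro allI impI)
    fix z and N :: nat assume dz: "dist z P < \<delta>0"
    define k where "k = N div 2"
    have Lk: "L * \<kappa> / \<sigma> \<ge> 0" using L1 kap sg by simp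
    have dnn: "dist z P \<ge> 0" by simp
    show "min (dist ((f^^N) z) P) (dist ((f^^N) z) Q) \<le> K * \<sigma>^N * dist z P"
    proof (cases "even N")
      case True
      then have N: "N = 2*k" unfolding k_def by simp
      have "min (dist ((f^^N) z) P) (dist ((f^^N) z) Q) \<le> dist ((f^^(2*k)) z) P" using N by simp
      also have "\<dots> \<le> \<kappa> * s^k * dist z P" using main[OF dz, of k] unfolding s_def by simp
      also have "\<dots> = \<kappa> * \<sigma>^N * dist z P" using N sg2 by simp
      also have "\<dots> \<le> K * \<sigma>^N * dist z P" unfolding K_def using Lk sg dnn
        by (intro mult_right_mono) auto
      finally show ?thesis .
    next
      case False
      then have N: "N = Suc (2*k)" unfolding k_def by simp
      define y where "y = (f^^(2*k)) z"
      have m1: "dist y P \<le> \<kappa> * s^k * dist z P" "dist y P < r1" using main[OF dz, of k] unfolding s_def y_def by simp_all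
      have fN: "(f^^N) z = f y" unfolding N y_def by simp
      have "min (dist ((f^^N) z) P) (dist ((f^^N) z) Q) \<le> dist (f y) Q" unfolding fN by (rule min.cobounded2)
      also have "\<dots> \<le> L * dist y P" using m1(2) r1(2) by (intro fstep(1)) linarith
      also have "\<dots> \<le> L * (\<kappa> * s^k * dist z P)" using m1 L1 by (intro mult_left_mono) auto
      also have "\<dots> = (L * \<kappa> / \<sigma>) * \<sigma>^N * dist z P"
      proof -
        have "\<sigma>^N = \<sigma> * s^k" using N sg2[of k] by simp
        then show ?thesis using sg by simp
      qed
      also have "\<dots> \<le> K * \<sigma>^N * dist z P" unfolding K_def using kap sg dnn
        by (intro mult_right_mono) auto
      finally show ?thesis .
    qed
  qed
  note X = this
  show ?thesis
    by (rule exI[of _ \<delta>0], rule conjI[OF d0], rule exI[of _ K], rule exI[of _ \<sigma>]) (intro conjI sg X)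
qed

lemma infdist_two: "infdist z {P, Q} = min (dist z P) (dist z Q)"
proof -
  have a: "infdist z ({P} \<union> {Q}) = min (infdist z {P}) (infdist z {Q})" by (rule infdist_Un_min) auto
  have b: "{P} \<union> {Q} = {P, Q}" by auto
  show ?thesis using a unfolding b infdist_singleton .
qed

lemma main_cycle:
  fixes a b c d :: real
  assumes ha: "a > \<bar>b+1\<bar>" and hc: "c < - \<bar>d+1\<bar>" and hbd: "b*d < 1"
    and hal: "a*c + (b-1)*(d-1) > 0"
  shows "has_stable_LR_cycle (bcnf a b c d)"
proof -
  define f where "f = bcnf a b c d"
  define D where "D = (1+b)*(1+d) - a*c"
  have Dpos: "D > 0"
  proof -
    have "\<bar>1+b\<bar>*\<bar>1+d\<bar> \<le> a*\<bar>1+d\<bar>" using ha by (intro mult_right_mono) (auto simp: add.commute)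
    also have "\<dots> < a*(-c)" using ha hc by (intro mult_strict_left_mono) (auto simp: add.commute)
    finally have "\<bar>(1+b)*(1+d)\<bar> < -(a*c)" by (simp add: abs_mult)
    then show ?thesis unfolding D_def by linarith
  qed
  define x1 where "x1 = ((1+d) + c)/D"
  define x2 where "x2 = ((1+b) + a)/D"
  define y1 where "y1 = - d * x2"
  define y2 where "y2 = - b * x1"
  define P where "P = (x1, y1)"
  define Q where "Q = (x2, y2)"
  have x1neg: "x1 < 0" unfolding x1_def using Dpos hc by (intro divide_neg_pos) auto
  have x2pos: "x2 > 0" unfolding x2_def using Dpos ha by (intro divide_pos_pos) auto
  have eq1: "(1+d)*x2 = a*x1 + 1" unfolding x1_def x2_def using Dpos
    by (simp add: field_simps D_def)
  have eq2: "(1+b)*x1 = c*x2 + 1" unfolding x1_def x2_def using Dpos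
    by (simp add: field_simps D_def)
  have e1: "a*x1 + y1 + 1 = x2" using eq1 unfolding y1_def by (simp add: algebra_simps)
  have e2: "c*x2 + y2 + 1 = x1" using eq2 unfolding y2_def by (simp add: algebra_simps)
  have fP: "f P = Q" unfolding f_def bcnf_def P_def Q_def using x1neg e1 by (simp add: y2_def)
  have fQ: "f Q = P" unfolding f_def bcnf_def P_def Q_def using x2pos e2 by (simp add: y1_def)
  define r where "r = min (-x1) x2"
  have r: "r > 0" unfolding r_def using x1neg x2pos by simp
  have hL: "f z = Q + linA a b (z - P)" if "dist z P < r" for z
  proof -
    have "\<bar>fst z - x1\<bar> < -x1" using dist_fst_le[of z P] that unfolding r_def P_def dist_real_def by simp
    then have "fst z \<le> 0" by linarith
    then show ?thesis unfolding f_def bcnf_def P_def Q_def linA_def using e1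
      by (cases z) (simp add: y2_def algebra_simps)
  qed
  have hR: "f z = P + linA c d (z - Q)" if "dist z Q < r" for z
  proof -
    have "\<bar>fst z - x2\<bar> < x2" using dist_fst_le[of z Q] that unfolding r_def Q_def dist_real_def by simp
    then have "\<not> fst z \<le> 0" by linarith
    then show ?thesis unfolding f_def bcnf_def P_def Q_def linA_def using e2
      by (cases z) (simp add: y1_def algebra_simps)
  qed
  have c1: "\<bar>a*c - b - d\<bar> < 1 + b*d"
  proof -
    have "a*c - b - d < 1 + b*d" using Dpos unfolding D_def by (simp add: algebra_simps)
    moreover have "-(a*c - b - d) < 1 + b*d" using hal by (simp add: algebra_simps)
    ultimately show ?thesis by linarith
  qed
  have c1': "\<bar>c*a - d - b\<bar> < 1 + d*b" using c1 by (simp add: mult.commute add.commute diff_diff_eq)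
  have hbd': "d*b < 1" using hbd by (simp add: mult.commute)
  obtain \<delta>1 K1 \<sigma>1 where d1: "\<delta>1 > 0" "0 < \<sigma>1" "\<sigma>1 < 1" and B1: "\<And>z n. dist z P < \<delta>1 \<Longrightarrow>
      min (dist ((f^^n) z) P) (dist ((f^^n) z) Q) \<le> K1 * \<sigma>1^n * dist z P"
    using half[OF r hL hR c1 hbd] by blast
  obtain \<delta>2 K2 \<sigma>2 where d2: "\<delta>2 > 0" "0 < \<sigma>2" "\<sigma>2 < 1" and B2: "\<And>z n. dist z Q < \<delta>2 \<Longrightarrow>
      min (dist ((f^^n) z) Q) (dist ((f^^n) z) P) \<le> K2 * \<sigma>2^n * dist z Q"
    using half[of r Q f P c d a b, OF r hR hL c1' hbd'] by blast
  define \<delta> where "\<delta> = min \<delta>1 \<delta>2"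
  define K where "K = max (max K1 K2) 0"
  define \<sigma> where "\<sigma> = max \<sigma>1 \<sigma>2"
  have dpos: "\<delta> > 0" unfolding \<delta>_def using d1 d2 by simp
  have Kpos: "K \<ge> 0" unfolding K_def by simp
  have sg: "0 < \<sigma>" "\<sigma> < 1" unfolding \<sigma>_def using d1 d2 by auto
  have U: "infdist ((f^^n) z) {P, Q} \<le> K * \<sigma>^n * infdist z {P, Q}" if iz: "infdist z {P, Q} < \<delta>" for z n
  proof (cases "dist z P \<le> dist z Q")
    case True
    then have i: "infdist z {P, Q} = dist z P" by (simp add: infdist_two)
    have "infdist ((f^^n) z) {P, Q} \<le> K1 * \<sigma>1^n * dist z P"
      unfolding infdist_two using B1[of z n] iz i unfolding \<delta>_def by simp
    also have "\<dots> \<le> K * \<sigma>^n * dist z P"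
      unfolding K_def \<sigma>_def using d1 d2
      by (intro mult_right_mono mult_mono power_mono) auto
    finally show ?thesis using i by simp
  next
    case False
    then have i: "infdist z {P, Q} = dist z Q" by (simp add: infdist_two)
    have "infdist ((f^^n) z) {P, Q} \<le> K2 * \<sigma>2^n * dist z Q"
      unfolding infdist_two using B2[of z n] iz i unfolding \<delta>_def by (simp add: min.commute)
    also have "\<dots> \<le> K * \<sigma>^n * dist z Q"
      unfolding K_def \<sigma>_def using d1 d2
      by (intro mult_right_mono mult_mono power_mono) auto
    finally show ?thesis using i by simp
  qed
  have stab: "lyapunov_stable_set f {P, Q}"
    unfolding lyapunov_stable_set_def
  proof (intro allI impI)
    fix e :: real assume e: "e > 0"
    define d0 where "d0 = min \<delta> (e/(K+1))"
    have d0: "d0 > 0" unfolding d0_def using dpos e Kpos by simp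
    have "infdist ((f^^n) z) {P, Q} < e" if "infdist z {P, Q} < d0" for z n
    proof -
      have iz: "infdist z {P, Q} < \<delta>" "infdist z {P, Q} < e/(K+1)" using that unfolding d0_def by auto
      have "infdist ((f^^n) z) {P, Q} \<le> K * \<sigma>^n * infdist z {P, Q}" using U iz by blast
      also have "\<dots> \<le> K * 1 * infdist z {P, Q}"
        using Kpos sg infdist_nonneg by (intro mult_right_mono mult_left_mono power_le_one) auto
      also have "\<dots> \<le> K * (e/(K+1))" using Kpos iz(2) by (simp only: mult_1_right, intro mult_left_mono) auto
      also have "\<dots> < e" using Kpos e by (simp add: field_simps)
      finally show ?thesis .
    qed
    then show "\<exists>d>0. \<forall>z. infdist z {P, Q} < d \<longrightarrow> (\<forall>n. infdist ((f ^^ n) z) {P, Q} < e)"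
      using d0 by blast
  qed
  have attr: "attracting_set f {P, Q}"
    unfolding attracting_set_def
  proof (intro exI[of _ \<delta>] conjI allI impI)
    show "\<delta> > 0" by (rule dpos)
    fix z assume iz: "infdist z {P, Q} < \<delta>"
    have lim: "(\<lambda>n. (K * infdist z {P, Q}) * \<sigma>^n) \<longlonglongrightarrow> 0"
      using sg by (intro tendsto_mult_right_zero LIMSEQ_power_zero) simp
    show "(\<lambda>n. infdist ((f ^^ n) z) {P, Q}) \<longlonglongrightarrow> 0"
    proof (rule tendsto_sandwich[OF _ _ tendsto_const lim])
      show "\<forall>\<^sub>F n in sequentially. 0 \<le> infdist ((f ^^ n) z) {P, Q}" by (simp add: infdist_nonneg)
      show "\<forall>\<^sub>F n in sequentially. infdist ((f ^^ n) z) {P, Q} \<le> K * infdist z {P, Q} * \<sigma> ^ n"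
        using U[OF iz] by (simp add: mult_ac)
    qed
  qed
  show ?thesis unfolding has_stable_LR_cycle_def f_def[symmetric]
    apply (rule exI[of _ P], rule exI[of _ Q])
    using x1neg x2pos fP fQ stab attr unfolding P_def Q_def asymptotically_stable_set_def by simp
qed

theorem proposition4p1:
  fixes tauL deltaL tauR deltaR :: real
  assumes "P2_region tauL deltaL tauR deltaR"
  shows "has_stable_LR_cycle (bcnf tauL deltaL tauR deltaR)"
  using assms unfolding P2_region_def Phi_region_def alpha_fn_def
  by (intro main_cycle) auto

end
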